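(* Let $T$ be a fair transition path, $p\in\mathbb{P}$ a nonfaulty proposer, $Q\in\mathcal{Q}$ a quorum all of whose members are nonfaulty, and $b\in\mathcal{B}$ a proposal number satisfying P1 and P2. If at some index $i$ of $T$ the proposer $p$ is ready to send prepare ($1a$) messages with proposal number $b$ to all members of $Q$, then there is an index $j$ such that in the configuration at index $j$ of $T$, $p$ has received promises ($1b$ messages) for $b$ from all members of $Q$.
   Context: Setting: the Synod consensus protocol modeled in a failure-aware actor model. An actor configuration is $\langle\alpha\,\|\,\bar\alpha\,\|\,\mu\rangle$ where $\alpha$ maps available actors to their states, $\bar\alpha$ maps failed actors to their states (states persist across failure), and $\mu$ is the multiset of messages en route. Transitions are base-level ($\mathbf{snd}$: an actor puts a message into $\mu$; $\mathbf{rcv}$: an actor removes a message addressed to it from $\mu$ and processes it; also $\mathbf{fun},\mathbf{new}$), which can only be taken by an available actor, and meta-level ($\mathbf{stp}$: an available actor becomes failed; $\mathbf{bgn}$: a failed actor becomes available). A transition path is a sequence of configurations indexed by natural numbers (logical time), each obtained from the previous by a transition; messages are never lost. Actors are partitioned into proposers $\mathbb{P}$ and acceptors $\mathbb{A}$; a quorum is a nonempty subset of $\mathbb{A}$. A message is a tuple $\langle s,r,k,b,v\rangle$ (sender, receiver, kind $k\in\{1a,1b,2a,2b\}$ = prepare, promise, accept, voted; proposal number $b$; value $v$). The local state of actor $x$ in configuration $\kappa$ consists of the set of received but not yet responded-to messages, the highest proposal number seen, and the value of the highest-numbered accepted proposal. Fair transition paths satisfy: if a $\mathbf{snd}$ or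 $\mathbf{rcv}$ transition is enabled for an actor at some index, then either it occurs at some later index or from some later index on it is permanently disabled. Protocol rules: an available acceptor holding an unresponded $1a$ message with number $b$ greater than its highest seen number becomes ready to send a $1b$ (promise) to the sender carrying $b$ and its highest accepted proposal number and value; a proposer that has received $1b$ messages for $b$ from all members of a quorum $Q$ becomes ready to send $2a$ messages with $b$ and a value chosen from its configuration to all members of $Q$; an available acceptor holding an unresponded $2a$ message with number $b$ at least its highest seen number becomes ready to send a $2b$ message with $b$ and the value to the sender; if a message addressed to an available actor is in $\mu$, a $\mathbf{rcv}$ of it is enabled. An actor $x$ is nonfaulty if: $x$ eventually becomes available whenever there is a message en route that $x$ must receive; $x$ eventually becomes available whenever its local state dictates it must send a message; and any enabled $\mathbf{snd}$ or $\mathbf{rcv}$ transition of $x$ either eventually occurs or is infinitely often enabled. A proposal number $b$ satisfies P1 and P2 if whenever an acceptor receives a prepare message with $b$, $b$ is greater than all proposal numbers that acceptor has previously seen, and whenever an acceptor receives an accept message with $b$, $b$ is greater than or equal to all proposal numbers it has previously seen. *)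

theory Defs
  imports Main "HOL-Library.Multiset"
begin

text \<open>Actors are the elements of the type 'a; they are partitioned into proposers
  and acceptors (sets passed as parameters Prop and Acc).\<close>

datatype kind = K1a | K1b | K2a | K2b

text \<open>The value component is of type (nat * 'v) option:
  1a: unused; 1b: the acceptor's highest accepted (number, value), if any;
  2a/2b: Some (b, v).\<close>
datatype ('a, 'v) msg =
  Msg (msnd: 'a) (mrcv: 'a) (mknd: kind) (mbal: nat) (mval: "(nat \<times> 'v) option")

text \<open>Local state: received-but-not-responded messages, highest proposal number
  seen, highest-numbered accepted proposal, and the set of messages the actor is
  currently ready to send.\<close>
record ('a, 'v) lstate =
  inbox :: "('a, 'v) msg set"
  hi    :: nat
  acc   :: "(nat \<times> 'v) option"
  out   :: "('a, 'v) msg set"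

text \<open>Configuration: set of available actors (domain of alpha; the others form
  the domain of alpha-bar), the state of every actor (persisting across failure),
  and the multiset of messages en route.\<close>
record ('a, 'v) config =
  av :: "'a set"
  st :: "'a \<Rightarrow> ('a, 'v) lstate"
  mu :: "('a, 'v) msg multiset"

datatype ('a, 'v) label =
  Snd 'a "('a, 'v) msg" | Rcv 'a "('a, 'v) msg" | Fun 'a | Stp 'a | Bgn 'a

definition quorum :: "'a set \<Rightarrow> 'a set \<Rightarrow> bool" where
  "quorum Acc Q \<longleftrightarrow> Q \<noteq> {} \<and> Q \<subseteq> Acc"

definition rcv_rel :: "'a set \<Rightarrow> 'a set \<Rightarrow> 'a \<Rightarrow> ('a, 'v) msg
    \<Rightarrow> ('a, 'v) lstate \<Rightarrow> ('a, 'v) lstate \<Rightarrow> bool" where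
  "rcv_rel Prop Acc a m s s' \<longleftrightarrow>
    (if a \<in> Acc \<and> mknd m = K1a then
       (if hi s < mbal m
        then s' = s\<lparr>hi := mbal m,
                    out := insert (Msg a (msnd m) K1b (mbal m) (acc s)) (out s)\<rparr>
        else s' = s)
     else if a \<in> Acc \<and> mknd m = K2a then
       (if hi s \<le> mbal m
        then s' = s\<lparr>hi := mbal m, acc := mval m,
                    out := insert (Msg a (msnd m) K2b (mbal m) (mval m)) (out s)\<rparr>
        else s' = s)
     else if a \<in> Prop \<and> mknd m = K1b then
       (\<exists>X. (X = {} \<or>
              (\<exists>Q v. quorum Acc Q \<and>
                 (\<forall>q\<in>Q. \<exists>w. Msg q a K1b (mbal m) w \<in> insert m (inbox s)) \<and>
                 X = {Msg a q K2a (mbal m) (Some (mbal m, v)) | q. q \<in> Q})) \<and>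
            s' = s\<lparr>inbox := insert m (inbox s), out := out s \<union> X\<rparr>)
     else if a \<in> Prop \<and> mknd m = K2b then
       s' = s\<lparr>inbox := insert m (inbox s)\<rparr>
     else s' = s)"

text \<open>Labelled transitions. snd/rcv/fun are base-level (only available actors);
  stp/bgn are meta-level.\<close>
definition step :: "'a set \<Rightarrow> 'a set \<Rightarrow> ('a, 'v) label
    \<Rightarrow> ('a, 'v) config \<Rightarrow> ('a, 'v) config \<Rightarrow> bool" where
  "step Prop Acc l c c' \<longleftrightarrow>
    (case l of
      Snd a m \<Rightarrow> a \<in> av c \<and> m \<in> out (st c a) \<and>
        c' = c\<lparr>st := (st c)(a := (st c a)\<lparr>out := out (st c a) - {m}\<rparr>),
               mu := mu c + {#m#}\<rparr>
    | Rcv a m \<Rightarrow> a \<in> av c \<and> m \<in># mu c \<and> mrcv m = a \<and>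
        (\<exists>s'. rcv_rel Prop Acc a m (st c a) s' \<and>
              c' = c\<lparr>st := (st c)(a := s'), mu := mu c - {#m#}\<rparr>)
    | Fun a \<Rightarrow> a \<in> av c \<and> a \<in> Prop \<and>
        (\<exists>Q b. quorum Acc Q \<and>
           c' = c\<lparr>st := (st c)(a := (st c a)\<lparr>out := out (st c a) \<union>
                      {Msg a q K1a b None | q. q \<in> Q}\<rparr>)\<rparr>)
    | Stp a \<Rightarrow> a \<in> av c \<and> c' = c\<lparr>av := av c - {a}\<rparr>
    | Bgn a \<Rightarrow> a \<notin> av c \<and> c' = c\<lparr>av := insert a (av c)\<rparr>)"

definition enabled :: "'a set \<Rightarrow> 'a set \<Rightarrow> ('a, 'v) label \<Rightarrow> ('a, 'v) config \<Rightarrow> bool" where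
  "enabled Prop Acc l c \<longleftrightarrow> (\<exists>c'. step Prop Acc l c c')"

definition occurs :: "'a set \<Rightarrow> 'a set \<Rightarrow> (nat \<Rightarrow> ('a, 'v) config) \<Rightarrow> ('a, 'v) label \<Rightarrow> nat \<Rightarrow> bool" where
  "occurs Prop Acc T l k \<longleftrightarrow> step Prop Acc l (T k) (T (Suc k))"

definition transition_path :: "'a set \<Rightarrow> 'a set \<Rightarrow> (nat \<Rightarrow> ('a, 'v) config) \<Rightarrow> bool" where
  "transition_path Prop Acc T \<longleftrightarrow> (\<forall>k. \<exists>l. occurs Prop Acc T l k)"

definition is_snd_rcv :: "('a, 'v) label \<Rightarrow> bool" where
  "is_snd_rcv l \<longleftrightarrow> (case l of Snd _ _ \<Rightarrow> True | Rcv _ _ \<Rightarrow> True | _ \<Rightarrow> False)"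

definition fair_path :: "'a set \<Rightarrow> 'a set \<Rightarrow> (nat \<Rightarrow> ('a, 'v) config) \<Rightarrow> bool" where
  "fair_path Prop Acc T \<longleftrightarrow> transition_path Prop Acc T \<and>
    (\<forall>l k. is_snd_rcv l \<and> enabled Prop Acc l (T k) \<longrightarrow>
       (\<exists>k'\<ge>k. occurs Prop Acc T l k') \<or>
       (\<exists>k'\<ge>k. \<forall>k''\<ge>k'. \<not> enabled Prop Acc l (T k'')))"

definition nonfaulty :: "'a set \<Rightarrow> 'a set \<Rightarrow> (nat \<Rightarrow> ('a, 'v) config) \<Rightarrow> 'a \<Rightarrow> bool" where
  "nonfaulty Prop Acc T x \<longleftrightarrow>
    (\<forall>k. (\<exists>m. m \<in># mu (T k) \<and> mrcv m = x) \<longrightarrow> (\<exists>k'\<ge>k. x \<in> av (T k'))) \<and>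
    (\<forall>k. out (st (T k) x) \<noteq> {} \<longrightarrow> (\<exists>k'\<ge>k. x \<in> av (T k'))) \<and>
    (\<forall>m k. \<forall>l \<in> {Snd x m, Rcv x m}. enabled Prop Acc l (T k) \<longrightarrow>
       (\<exists>k'\<ge>k. occurs Prop Acc T l k') \<or>
       (\<forall>k'. \<exists>k''\<ge>k'. enabled Prop Acc l (T k'')))"

definition P1 :: "'a set \<Rightarrow> 'a set \<Rightarrow> (nat \<Rightarrow> ('a, 'v) config) \<Rightarrow> nat \<Rightarrow> bool" where
  "P1 Prop Acc T b \<longleftrightarrow> (\<forall>a m k. a \<in> Acc \<and> mknd m = K1a \<and> mbal m = b \<and>
      occurs Prop Acc T (Rcv a m) k \<longrightarrow> hi (st (T k) a) < b)"

definition P2 :: "'a set \<Rightarrow> 'a set \<Rightarrow> (nat \<Rightarrow> ('a, 'v) config) \<Rightarrow> nat \<Rightarrow> bool" where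
  "P2 Prop Acc T b \<longleftrightarrow> (\<forall>a m k. a \<in> Acc \<and> mknd m = K2a \<and> mbal m = b \<and>
      occurs Prop Acc T (Rcv a m) k \<longrightarrow> hi (st (T k) a) \<le> b)"

end

theory Submission
  imports Defs
begin

lemma out_keep:
  assumes "step Prop Acc l c c'" "m \<in> out (st c x)" "l \<noteq> Snd x m"
  shows "m \<in> out (st c' x)"
  using assms
  by (cases l) (auto simp: step_def rcv_rel_def split: if_splits)

lemma mu_keep:
  assumes "step Prop Acc l c c'" "m \<in># mu c" "\<forall>a. l \<noteq> Rcv a m"
  shows "m \<in># mu c'"
  using assms
  by (cases l) (auto simp: step_def in_diff_count)

lemma inbox_mono_step:
  assumes "step Prop Acc l c c'"
  shows "inbox (st c x) \<subseteq> inbox (st c' x)"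
  using assms
  by (cases l) (auto simp: step_def rcv_rel_def split: if_splits)

lemma rcv_ex: "\<exists>s'. rcv_rel Prop Acc a m s s'"
proof (cases "a \<in> Acc \<and> mknd m = K1a")
  case c1: True
  show ?thesis unfolding rcv_rel_def if_P[OF c1]
    by (cases "hi s < mbal m") simp_all
next
  case c1: False
  show ?thesis
  proof (cases "a \<in> Acc \<and> mknd m = K2a")
    case c2: True
    show ?thesis unfolding rcv_rel_def if_not_P[OF c1] if_P[OF c2]
      by (cases "hi s \<le> mbal m") simp_all
  next
    case c2: False
    show ?thesis
    proof (cases "a \<in> Prop \<and> mknd m = K1b")
      case c3: True
      show ?thesis unfolding rcv_rel_def if_not_P[OF c1] if_not_P[OF c2] if_P[OF c3]
        by (rule exI, rule exI[of _ "{}"], rule conjI, rule disjI1, rule refl, rule refl)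
    next
      case c3: False
      show ?thesis
      proof (cases "a \<in> Prop \<and> mknd m = K2b")
        case c4: True
        show ?thesis unfolding rcv_rel_def if_not_P[OF c1] if_not_P[OF c2] if_not_P[OF c3] if_P[OF c4]
          by (rule exI, rule refl)
      next
        case c4: False
        show ?thesis unfolding rcv_rel_def if_not_P[OF c1] if_not_P[OF c2] if_not_P[OF c3] if_not_P[OF c4]
          by (rule exI, rule refl)
      qed
    qed
  qed
qed

lemma eventually_occurs:
  assumes fair: "fair_path Prop Acc T" and sr: "is_snd_rcv l"
    and P0: "P k"
    and keep: "\<And>n. P n \<Longrightarrow> \<not> occurs Prop Acc T l n \<Longrightarrow> P (Suc n)"
    and avail: "\<And>n. P n \<Longrightarrow> \<exists>n'\<ge>n. x \<in> av (T n')"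
    and en: "\<And>n. P n \<Longrightarrow> x \<in> av (T n) \<Longrightarrow> enabled Prop Acc l (T n)"
  shows "\<exists>n\<ge>k. occurs Prop Acc T l n"
proof (rule ccontr)
  assume no: "\<not> (\<exists>n\<ge>k. occurs Prop Acc T l n)"
  have noo: "\<not> occurs Prop Acc T l n" if "k \<le> n" for n
    using no that by blast
  have Pall: "P n" if "k \<le> n" for n
    using that
  proof (induct rule: dec_induct)
    case base then show ?case by (rule P0)
  next
    case (step n)
    have "\<not> occurs Prop Acc T l n" using noo step.hyps(1) .
    then show ?case using keep step.hyps(3) by blast
  qed
  have inf: "\<exists>n'\<ge>n. enabled Prop Acc l (T n')" if nk: "n \<ge> k" for n
  proof -
    obtain n' where n': "n' \<ge> n" "x \<in> av (T n')" using avail[OF Pall[OF nk]] by blast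
    have "k \<le> n'" using nk n'(1) by linarith
    then have "enabled Prop Acc l (T n')" using en Pall n'(2) by blast
    then show ?thesis using n'(1) by blast
  qed
  obtain n0 where n0: "n0 \<ge> k" "enabled Prop Acc l (T n0)" using inf[of k] by blast
  have fr: "\<forall>l k. is_snd_rcv l \<and> enabled Prop Acc l (T k) \<longrightarrow>
       (\<exists>k'\<ge>k. occurs Prop Acc T l k') \<or>
       (\<exists>k'\<ge>k. \<forall>k''\<ge>k'. \<not> enabled Prop Acc l (T k''))"
    using fair unfolding fair_path_def by (rule conjunct2)
  have "is_snd_rcv l \<and> enabled Prop Acc l (T n0)" using sr n0(2) by (rule conjI)
  then have
    "(\<exists>k'\<ge>n0. occurs Prop Acc T l k') \<or> (\<exists>k'\<ge>n0. \<forall>k''\<ge>k'. \<not> enabled Prop Acc l (T k''))"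
    using fr by blast
  then show False
  proof
    assume "\<exists>k'\<ge>n0. occurs Prop Acc T l k'"
    then obtain k' where "k' \<ge> n0" "occurs Prop Acc T l k'" by blast
    moreover have "k \<le> k'" using n0(1) \<open>k' \<ge> n0\<close> by linarith
    ultimately show False using noo by blast
  next
    assume "\<exists>k'\<ge>n0. \<forall>k''\<ge>k'. \<not> enabled Prop Acc l (T k'')"
    then obtain k' where k': "k' \<ge> n0" "\<forall>k''\<ge>k'. \<not> enabled Prop Acc l (T k'')" by blast
    have "k \<le> k'" using n0(1) k'(1) by linarith
    then obtain k'' where "k'' \<ge> k'" "enabled Prop Acc l (T k'')" using inf by blast
    then show False using k'(2) by blast
  qed
qed

lemma snd_eventually:
  assumes fair: "fair_path Prop Acc T" and nf: "nonfaulty Prop Acc T x"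
    and m: "m \<in> out (st (T k) x)"
  shows "\<exists>n\<ge>k. occurs Prop Acc T (Snd x m) n \<and> m \<in># mu (T (Suc n))"
proof -
  have tp: "transition_path Prop Acc T" using fair unfolding fair_path_def by (rule conjunct1)
  have "\<exists>n\<ge>k. occurs Prop Acc T (Snd x m) n"
  proof (rule eventually_occurs[where P = "\<lambda>n. m \<in> out (st (T n) x)" and x = x])
    show "fair_path Prop Acc T" by (rule fair)
    show "is_snd_rcv (Snd x m)" by (simp add: is_snd_rcv_def)
    show "m \<in> out (st (T k) x)" by (rule m)
  next
    fix n assume a: "m \<in> out (st (T n) x)" "\<not> occurs Prop Acc T (Snd x m) n"
    obtain l where l: "occurs Prop Acc T l n" using tp by (auto simp: transition_path_def)
    then have "l \<noteq> Snd x m" using a by auto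
    then show "m \<in> out (st (T (Suc n)) x)"
      using out_keep[OF l[unfolded occurs_def] a(1)] by blast
  next
    fix n assume "m \<in> out (st (T n) x)"
    then show "\<exists>n'\<ge>n. x \<in> av (T n')" using nf unfolding nonfaulty_def by blast
  next
    fix n assume "m \<in> out (st (T n) x)" "x \<in> av (T n)"
    then have "step Prop Acc (Snd x m) (T n) ((T n)\<lparr>st := (st (T n))(x := (st (T n) x)\<lparr>out := out (st (T n) x) - {m}\<rparr>),
               mu := mu (T n) + {#m#}\<rparr>)"
      unfolding step_def by simp
    then show "enabled Prop Acc (Snd x m) (T n)" unfolding enabled_def by blast
  qed
  then obtain n where "n \<ge> k" "occurs Prop Acc T (Snd x m) n" by blast
  then have "step Prop Acc (Snd x m) (T n) (T (Suc n))" "n \<ge> k" unfolding occurs_def by auto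
  then have "T (Suc n) = (T n)\<lparr>st := (st (T n))(x := (st (T n) x)\<lparr>out := out (st (T n) x) - {m}\<rparr>),
               mu := mu (T n) + {#m#}\<rparr>" unfolding step_def by simp
  then have "m \<in># mu (T (Suc n))" by simp
  then show ?thesis using \<open>n \<ge> k\<close> \<open>occurs Prop Acc T (Snd x m) n\<close> by blast
qed

lemma rcv_eventually:
  assumes fair: "fair_path Prop Acc T" and nf: "nonfaulty Prop Acc T x"
    and m: "m \<in># mu (T k)" and r: "mrcv m = x"
  shows "\<exists>n\<ge>k. occurs Prop Acc T (Rcv x m) n"
proof -
  have tp: "transition_path Prop Acc T" using fair unfolding fair_path_def by (rule conjunct1)
  show ?thesis
  proof (rule eventually_occurs[where P = "\<lambda>n. m \<in># mu (T n)" and x = x])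
    show "fair_path Prop Acc T" by (rule fair)
    show "is_snd_rcv (Rcv x m)" by (simp add: is_snd_rcv_def)
    show "m \<in># mu (T k)" by (rule m)
  next
    fix n assume a: "m \<in># mu (T n)" "\<not> occurs Prop Acc T (Rcv x m) n"
    obtain l where l: "occurs Prop Acc T l n" using tp by (auto simp: transition_path_def)
    have "\<forall>a. l \<noteq> Rcv a m"
    proof
      fix a show "l \<noteq> Rcv a m"
      proof
        assume "l = Rcv a m"
        then have "step Prop Acc (Rcv a m) (T n) (T (Suc n))" using l by (simp add: occurs_def)
        then have "a = mrcv m" unfolding step_def by simp
        then have "a = x" using r by simp
        then show False using \<open>l = Rcv a m\<close> l a by simp
      qed
    qed
    then show "m \<in># mu (T (Suc n))"
      using mu_keep[OF l[unfolded occurs_def] a(1)] by blast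
  next
    fix n assume "m \<in># mu (T n)"
    then show "\<exists>n'\<ge>n. x \<in> av (T n')" using nf r unfolding nonfaulty_def by blast
  next
    fix n assume a: "m \<in># mu (T n)" "x \<in> av (T n)"
    obtain s' where s': "rcv_rel Prop Acc x m (st (T n) x) s'"
      using rcv_ex[of Prop Acc x m "st (T n) x"] by blast
    have "step Prop Acc (Rcv x m) (T n) ((T n)\<lparr>st := (st (T n))(x := s'), mu := mu (T n) - {#m#}\<rparr>)"
      unfolding step_def using a r s' by (simp, blast)
    then show "enabled Prop Acc (Rcv x m) (T n)" unfolding enabled_def by blast
  qed
qed

lemma inbox_mono:
  assumes tp: "transition_path Prop Acc T" and "n \<le> n'"
  shows "inbox (st (T n) x) \<subseteq> inbox (st (T n') x)"
  using assms(2)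
proof (induct rule: dec_induct)
  case base then show ?case by simp
next
  case (step k)
  obtain l where "occurs Prop Acc T l k" using tp by (auto simp: transition_path_def)
  then have "inbox (st (T k) x) \<subseteq> inbox (st (T (Suc k)) x)"
    unfolding occurs_def by (rule inbox_mono_step)
  with step.hyps(3) show ?case by (rule order_trans)
qed

lemma aux_1b:
  "\<exists>X. P X \<and> s' = s\<lparr>inbox := insert m (inbox s), out := out s \<union> X\<rparr> \<Longrightarrow> m \<in> inbox s'"
  by auto

lemma rcv_rel_1b:
  assumes na: "a \<notin> Acc" and pa: "a \<in> Prop" and k: "mknd m = K1b"
    and r: "rcv_rel Prop Acc a m s s'"
  shows "m \<in> inbox s'"
proof -
  have c1: "\<not> (a \<in> Acc \<and> mknd m = K1a)" using na by blast
  have c2: "\<not> (a \<in> Acc \<and> mknd m = K2a)" using na by blast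
  have c3: "a \<in> Prop \<and> mknd m = K1b" using pa k by blast
  show ?thesis
    using r unfolding rcv_rel_def if_not_P[OF c1] if_not_P[OF c2] if_P[OF c3]
    by (rule aux_1b)
qed

lemma rcv_rel_1a:
  assumes aa: "a \<in> Acc" and k: "mknd m = K1a" and h: "hi s < mbal m"
    and r: "rcv_rel Prop Acc a m s s'"
  shows "Msg a (msnd m) K1b (mbal m) (acc s) \<in> out s'"
proof -
  have c1: "a \<in> Acc \<and> mknd m = K1a" using aa k by blast
  from r have "s' = s\<lparr>hi := mbal m,
                    out := insert (Msg a (msnd m) K1b (mbal m) (acc s)) (out s)\<rparr>"
    unfolding rcv_rel_def if_P[OF c1] if_P[OF h] .
  then show ?thesis by simp
qed

lemma occ_rcv:
  assumes "occurs Prop Acc T (Rcv a m) k"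
  obtains s' where "rcv_rel Prop Acc a m (st (T k) a) s'" "st (T (Suc k)) a = s'"
proof -
  from assms have "\<exists>s'. rcv_rel Prop Acc a m (st (T k) a) s' \<and>
      T (Suc k) = (T k)\<lparr>st := (st (T k))(a := s'), mu := mu (T k) - {#m#}\<rparr>"
    unfolding occurs_def step_def by simp
  then obtain s' where "rcv_rel Prop Acc a m (st (T k) a) s'"
      "T (Suc k) = (T k)\<lparr>st := (st (T k))(a := s'), mu := mu (T k) - {#m#}\<rparr>" by blast
  then show ?thesis using that by simp
qed

theorem lemma1:
  fixes Prop Acc :: "'a set" and T :: "nat \<Rightarrow> ('a, 'v) config"
    and p :: 'a and Q :: "'a set" and b :: nat and i :: nat
  assumes "Prop \<inter> Acc = {}" and "Prop \<union> Acc = UNIV" and "finite Acc"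
    and "fair_path Prop Acc T"
    and "p \<in> Prop" and "nonfaulty Prop Acc T p"
    and "quorum Acc Q" and "\<forall>q\<in>Q. nonfaulty Prop Acc T q"
    and "P1 Prop Acc T b" and "P2 Prop Acc T b"
    and "\<forall>q\<in>Q. \<exists>v. Msg p q K1a b v \<in> out (st (T i) p)"
  shows "\<exists>j. \<forall>q\<in>Q. \<exists>v. Msg q p K1b b v \<in> inbox (st (T j) p)"
proof -
  have fair: "fair_path Prop Acc T" by fact
  have tp: "transition_path Prop Acc T" using fair unfolding fair_path_def by (rule conjunct1)
  have pA: "p \<notin> Acc" using assms(1,5) by blast
  have QA: "Q \<subseteq> Acc" using assms(7) by (simp add: quorum_def)
  have each: "\<exists>n w. Msg q p K1b b w \<in> inbox (st (T n) p)" if q: "q \<in> Q" for q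
  proof -
    have nfq: "nonfaulty Prop Acc T q" using assms(8) q by blast
    have qA: "q \<in> Acc" using QA q by blast
    obtain v where m1: "Msg p q K1a b v \<in> out (st (T i) p)" using assms(11) q by blast
    obtain k1 where k1: "Msg p q K1a b v \<in># mu (T (Suc k1))"
      using snd_eventually[OF fair assms(6) m1] by blast
    obtain k2 where k2: "occurs Prop Acc T (Rcv q (Msg p q K1a b v)) k2"
      using rcv_eventually[OF fair nfq k1 msg.sel(2)] by blast
    have pre: "q \<in> Acc \<and> mknd (Msg p q K1a b v) = K1a \<and> mbal (Msg p q K1a b v) = b \<and>
        occurs Prop Acc T (Rcv q (Msg p q K1a b v)) k2" using k2 qA by simp
    have hi: "hi (st (T k2) q) < b"
      using assms(9)[unfolded P1_def, rule_format, OF pre] .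
    define m2 where "m2 = Msg q p K1b b (acc (st (T k2) q))"
    obtain s' where r: "rcv_rel Prop Acc q (Msg p q K1a b v) (st (T k2) q) s'"
      and e: "st (T (Suc k2)) q = s'"
      using occ_rcv[OF k2] by blast
    have m2: "m2 \<in> out (st (T (Suc k2)) q)"
      using rcv_rel_1a[OF qA _ _ r] hi e unfolding m2_def by simp
    obtain k3 where k3: "m2 \<in># mu (T (Suc k3))"
      using snd_eventually[OF fair nfq m2] by blast
    obtain k4 where k4: "occurs Prop Acc T (Rcv p m2) k4"
      using rcv_eventually[OF fair assms(6) k3] unfolding m2_def msg.sel by blast
    obtain s'' where r2: "rcv_rel Prop Acc p m2 (st (T k4) p) s''"
      and e2: "st (T (Suc k4)) p = s''"
      using occ_rcv[OF k4] by blast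
    have "m2 \<in> inbox (st (T (Suc k4)) p)"
      using rcv_rel_1b[OF pA assms(5) _ r2] e2 unfolding m2_def by simp
    then show ?thesis unfolding m2_def by blast
  qed
  then have "\<forall>q\<in>Q. \<exists>n. \<exists>w. Msg q p K1b b w \<in> inbox (st (T n) p)" by blast
  then have "\<exists>f. \<forall>q\<in>Q. \<exists>w. Msg q p K1b b w \<in> inbox (st (T (f q)) p)" by (rule bchoice)
  then obtain f where f: "\<forall>q\<in>Q. \<exists>w. Msg q p K1b b w \<in> inbox (st (T (f q)) p)"
    by blast
  have fin: "finite Q" using QA assms(3) finite_subset by blast
  show ?thesis
  proof (rule exI[of _ "sum f Q"], intro ballI)
    fix q assume q: "q \<in> Q"
    have le: "f q \<le> sum f Q" using fin q by (simp add: member_le_sum)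
    obtain w where "Msg q p K1b b w \<in> inbox (st (T (f q)) p)" using f q by blast
    then show "\<exists>w. Msg q p K1b b w \<in> inbox (st (T (sum f Q)) p)"
      using inbox_mono[OF tp le] by blast
  qed
qed

end
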